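(* Let $L$ be a finite-dimensional pure, nonnilpotent, solvable Lie algebra over $\mathbb{C}$ of breadth $2$ such that $\dim[L,L]=2$ and $\dim L^k=2$ for all integers $k\geq 2$. Then $L$ has a basis such that one of the following holds (in each case the listed brackets are the only nonzero brackets of basis elements, up to antisymmetry): (1) basis $\{x_1,x_2,x_3,x_4,x_5\}$ with $[x_1,x_5]=x_4$, $[x_2,x_4]=x_4$, $[x_3,x_5]=x_5$; (2) $L=\mathrm{span}\{x_1,x_2\}\oplus\mathrm{span}\{x_3,x_4\}$ (direct sum of Lie algebras) with $[x_1,x_2]=x_2$, $[x_3,x_4]=x_4$; (3) basis $\{x_1,x_2,x_3,x_4\}$ with $[x_1,x_4]=x_3$, $[x_2,x_3]=x_3$, $[x_2,x_4]=x_4$; (4) basis $\{x_1,x_2,x_3\}$ with $[x_1,x_2]=x_2$, $[x_1,x_3]=x_2+x_3$; (5) basis $\{x_1,x_2,x_3\}$ with $[x_1,x_2]=x_2$, $[x_1,x_3]=\gamma x_3$ for some $\gamma\in\mathbb{C}\setminus\{0\}$.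
   Context: For $x\in L$, the breadth of $x$ is $b(x)=\mathrm{rank}(\mathrm{ad}_x)$, and $b(L)=\max\{b(x)\mid x\in L\}$. $L$ is pure if it has no abelian ideal as a direct summand; equivalently $Z(L)\subseteq[L,L]$, where $Z(L)$ is the center. The lower central series is indexed by $L^0=L$, $L^1=[L,L]$ and $L^k=[L,L^{k-1}]$ for $k\geq 2$. *)

theory Defs
  imports Complex_Main
begin

text \<open>A complex Lie algebra is modelled as the whole carrier type 'a, equipped with a
  complex scalar multiplication sc (making 'a a complex vector space) and a bracket br.\<close>

definition lie_algebra :: "(complex \<Rightarrow> 'a::ab_group_add \<Rightarrow> 'a) \<Rightarrow> ('a \<Rightarrow> 'a \<Rightarrow> 'a) \<Rightarrow> bool" where
  "lie_algebra sc br \<longleftrightarrow> vector_space sc \<and>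
     (\<forall>x y z. br (x + y) z = br x z + br y z) \<and>
     (\<forall>x y z. br x (y + z) = br x y + br x z) \<and>
     (\<forall>c x y. br (sc c x) y = sc c (br x y)) \<and>
     (\<forall>c x y. br x (sc c y) = sc c (br x y)) \<and>
     (\<forall>x. br x x = 0) \<and>
     (\<forall>x y z. br x (br y z) + br y (br z x) + br z (br x y) = 0)"

definition fin_dim :: "(complex \<Rightarrow> 'a::ab_group_add \<Rightarrow> 'a) \<Rightarrow> bool" where
  "fin_dim sc \<longleftrightarrow> (\<exists>B. finite B \<and> module.span sc B = UNIV)"

definition brk_set :: "(complex \<Rightarrow> 'a::ab_group_add \<Rightarrow> 'a) \<Rightarrow> ('a \<Rightarrow> 'a \<Rightarrow> 'a) \<Rightarrow> 'a set \<Rightarrow> 'a set \<Rightarrow> 'a set" where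
  "brk_set sc br A B = module.span sc {br a b | a b. a \<in> A \<and> b \<in> B}"

fun lcs :: "(complex \<Rightarrow> 'a::ab_group_add \<Rightarrow> 'a) \<Rightarrow> ('a \<Rightarrow> 'a \<Rightarrow> 'a) \<Rightarrow> nat \<Rightarrow> 'a set" where
  "lcs sc br 0 = UNIV"
| "lcs sc br (Suc k) = brk_set sc br UNIV (lcs sc br k)"

fun dsr :: "(complex \<Rightarrow> 'a::ab_group_add \<Rightarrow> 'a) \<Rightarrow> ('a \<Rightarrow> 'a \<Rightarrow> 'a) \<Rightarrow> nat \<Rightarrow> 'a set" where
  "dsr sc br 0 = UNIV"
| "dsr sc br (Suc k) = brk_set sc br (dsr sc br k) (dsr sc br k)"

definition solvable :: "(complex \<Rightarrow> 'a::ab_group_add \<Rightarrow> 'a) \<Rightarrow> ('a \<Rightarrow> 'a \<Rightarrow> 'a) \<Rightarrow> bool" where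
  "solvable sc br \<longleftrightarrow> (\<exists>k. dsr sc br k = {0})"

definition nilpotent :: "(complex \<Rightarrow> 'a::ab_group_add \<Rightarrow> 'a) \<Rightarrow> ('a \<Rightarrow> 'a \<Rightarrow> 'a) \<Rightarrow> bool" where
  "nilpotent sc br \<longleftrightarrow> (\<exists>k. lcs sc br k = {0})"

definition lie_ideal :: "(complex \<Rightarrow> 'a::ab_group_add \<Rightarrow> 'a) \<Rightarrow> ('a \<Rightarrow> 'a \<Rightarrow> 'a) \<Rightarrow> 'a set \<Rightarrow> bool" where
  "lie_ideal sc br I \<longleftrightarrow> module.subspace sc I \<and> (\<forall>x y. y \<in> I \<longrightarrow> br x y \<in> I)"

definition pure :: "(complex \<Rightarrow> 'a::ab_group_add \<Rightarrow> 'a) \<Rightarrow> ('a \<Rightarrow> 'a \<Rightarrow> 'a) \<Rightarrow> bool" where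
  "pure sc br \<longleftrightarrow> \<not> (\<exists>A B. lie_ideal sc br A \<and> lie_ideal sc br B \<and> A \<noteq> {0} \<and>
      (\<forall>a\<in>A. \<forall>a'\<in>A. br a a' = 0) \<and> A \<inter> B = {0} \<and> {a + b | a b. a \<in> A \<and> b \<in> B} = UNIV)"

definition breadth_elt :: "(complex \<Rightarrow> 'a::ab_group_add \<Rightarrow> 'a) \<Rightarrow> ('a \<Rightarrow> 'a \<Rightarrow> 'a) \<Rightarrow> 'a \<Rightarrow> nat" where
  "breadth_elt sc br x = vector_space.dim sc (range (br x))"

definition breadth :: "(complex \<Rightarrow> 'a::ab_group_add \<Rightarrow> 'a) \<Rightarrow> ('a \<Rightarrow> 'a \<Rightarrow> 'a) \<Rightarrow> nat" where
  "breadth sc br = Max (range (breadth_elt sc br))"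

text \<open>Bracket table given by a list of the nonzero brackets ((i,j), v) with i < j;
  extended by antisymmetry, all other brackets of basis elements are zero.\<close>
definition table :: "((nat \<times> nat) \<times> 'a::ab_group_add) list \<Rightarrow> nat \<Rightarrow> nat \<Rightarrow> 'a" where
  "table T i j = (case map_of T (i, j) of Some v \<Rightarrow> v
                  | None \<Rightarrow> (case map_of T (j, i) of Some v \<Rightarrow> - v | None \<Rightarrow> 0))"

definition basis_with_brackets :: "(complex \<Rightarrow> 'a::ab_group_add \<Rightarrow> 'a) \<Rightarrow> ('a \<Rightarrow> 'a \<Rightarrow> 'a) \<Rightarrow> nat
    \<Rightarrow> (nat \<Rightarrow> 'a) \<Rightarrow> ((nat \<times> nat) \<times> 'a) list \<Rightarrow> bool" where
  "basis_with_brackets sc br n x T \<longleftrightarrow>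
     inj_on x {1..n} \<and> \<not> module.dependent sc (x ` {1..n}) \<and> module.span sc (x ` {1..n}) = UNIV \<and>
     (\<forall>i\<in>{1..n}. \<forall>j\<in>{1..n}. br (x i) (x j) = table T i j)"

end

theory Submission
  imports Defs
begin


lemma centr:
  fixes a b c d p q r s :: complex
  assumes "b*r = q*c" "r*(a - d) = c*(p - s)" "q*(a-d) = b*(p-s)" "b\<noteq>0 \<or> c\<noteq>0 \<or> a\<noteq>d"
  shows "\<exists>\<alpha> \<beta>. p = \<alpha> + \<beta>*a \<and> q = \<beta>*b \<and> r = \<beta>*c \<and> s = \<alpha> + \<beta>*d"
proof -
  consider "b \<noteq> 0" | "b = 0" "c \<noteq> 0" | "b = 0" "c = 0" "a \<noteq> d" using assms(4) by blast
  then show ?thesis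
  proof cases
    case 1
    define \<beta> where "\<beta> = q / b"
    define \<alpha> where "\<alpha> = p - \<beta>*a"
    have "q = \<beta>*b" using 1 by (simp add: \<beta>_def)
    moreover have "r = \<beta>*c" using 1 assms(1) by (simp add: \<beta>_def field_simps)
    moreover have "s = \<alpha> + \<beta>*d" using 1 assms(3) unfolding \<alpha>_def \<beta>_def
      by (simp add: field_simps)
    ultimately show ?thesis by (intro exI[of _ \<alpha>] exI[of _ \<beta>]) (auto simp: \<alpha>_def)
  next
    case 2
    define \<beta> where "\<beta> = r / c"
    define \<alpha> where "\<alpha> = p - \<beta>*a"
    have "r = \<beta>*c" using 2 by (simp add: \<beta>_def)
    moreover have "q = \<beta>*b" using 2 assms(1) by (simp add: \<beta>_def field_simps)
    moreover have "s = \<alpha> + \<beta>*d" using 2 assms(2) unfolding \<alpha>_def \<beta>_def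
      by (simp add: field_simps)
    ultimately show ?thesis by (intro exI[of _ \<alpha>] exI[of _ \<beta>]) (auto simp: \<alpha>_def)
  next
    case 3
    define \<beta> where "\<beta> = (p - s) / (a - d)"
    define \<alpha> where "\<alpha> = p - \<beta>*a"
    have ad: "a - d \<noteq> 0" using 3 by simp
    have "q = 0" using 3 assms(3) by simp
    moreover have "r = 0" using 3 assms(2) by simp
    moreover have "s = \<alpha> + \<beta>*d"
    proof -
      have "\<beta>*(a-d) = p - s" using ad by (simp add: \<beta>_def)
      then show ?thesis unfolding \<alpha>_def by (simp add: algebra_simps)
    qed
    ultimately show ?thesis using 3 by (intro exI[of _ \<alpha>] exI[of _ \<beta>]) (auto simp: \<alpha>_def)
  qed
qed

lemma det_alpha:
  fixes a b c d \<alpha> \<beta> :: complex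
  assumes "a*d - b*c = 0"
    "(\<alpha> + \<beta>*a)*(\<alpha> + \<beta>*d) - (\<beta>*b)*(\<beta>*c) = 0"
    "(\<alpha> + (\<beta>+1)*a)*(\<alpha> + (\<beta>+1)*d) - ((\<beta>+1)*b)*((\<beta>+1)*c) = 0"
  shows "\<alpha> = 0"
proof -
  have i1: "(\<alpha> + \<beta>*a)*(\<alpha> + \<beta>*d) - (\<beta>*b)*(\<beta>*c) = \<alpha>*\<alpha> + \<alpha>*\<beta>*(a+d) + \<beta>*\<beta>*(a*d - b*c)"
    by (simp add: algebra_simps)
  have i2: "(\<alpha> + (\<beta>+1)*a)*(\<alpha> + (\<beta>+1)*d) - ((\<beta>+1)*b)*((\<beta>+1)*c) = \<alpha>*\<alpha> + \<alpha>*(\<beta>+1)*(a+d) + (\<beta>+1)*(\<beta>+1)*(a*d - b*c)"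
    by (simp add: algebra_simps)
  have e1: "\<alpha>*\<alpha> + \<alpha>*\<beta>*(a+d) = 0" using i1 assms by simp
  have e2: "\<alpha>*\<alpha> + \<alpha>*(\<beta>+1)*(a+d) = 0" using i2 assms by simp
  have "(\<alpha>*\<alpha> + \<alpha>*(\<beta>+1)*(a+d)) - (\<alpha>*\<alpha> + \<alpha>*\<beta>*(a+d)) = \<alpha>*(a+d)"
    by (simp add: algebra_simps)
  then have "\<alpha>*(a+d) = 0" using e1 e2 by simp
  then have "\<alpha>*\<alpha> = 0" using e1 by (metis add.right_neutral mult.commute mult_zero_left mult.assoc)
  then show ?thesis by simp
qed

lemma image_line:
  fixes a b c d :: complex
  assumes "a*d - b*c = 0"
  shows "\<exists>w1 w2. \<forall>p q. \<exists>t. a*p + b*q = t*w1 \<and> c*p + d*q = t*w2"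
proof (cases "a = 0")
  case False
  have "\<forall>p q. a*p + b*q = (p + b/a*q)*a \<and> c*p + d*q = (p + b/a*q)*c"
    using False assms by (auto simp: field_simps)
  then show ?thesis by blast
next
  case a0: True
  show ?thesis
  proof (cases "c = 0")
    case False
    have "b = 0" using a0 False assms by simp
    have "\<forall>p q. a*p + b*q = (p + d/c*q)*a \<and> c*p + d*q = (p + d/c*q)*c"
      using False a0 \<open>b = 0\<close> by (auto simp: field_simps)
    then show ?thesis by blast
  next
    case True
    have "\<forall>p q. a*p + b*q = q*b \<and> c*p + d*q = q*d" using True a0 by (auto simp: field_simps)
    then show ?thesis by blast
  qed
qed

lemma cramer:
  fixes a b c d p q :: complex
  assumes "a*d - b*c \<noteq> 0"
  shows "\<exists>s t. a*s + b*t = p \<and> c*s + d*t = q"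
proof -
  let ?D = "a*d - b*c"
  have e1: "a*(p*d - b*q) + b*(a*q - c*p) = p*?D" by (simp add: algebra_simps)
  have e2: "c*(p*d - b*q) + d*(a*q - c*p) = q*?D" by (simp add: algebra_simps)
  have "a*((p*d - b*q)/?D) + b*((a*q - c*p)/?D) = (a*(p*d - b*q) + b*(a*q - c*p))/?D"
    by (simp only: times_divide_eq_right add_divide_distrib)
  also have "... = p" using e1 assms by simp
  finally have 1: "a*((p*d - b*q)/?D) + b*((a*q - c*p)/?D) = p" .
  have "c*((p*d - b*q)/?D) + d*((a*q - c*p)/?D) = (c*(p*d - b*q) + d*(a*q - c*p))/?D"
    by (simp only: times_divide_eq_right add_divide_distrib)
  also have "... = q" using e2 assms by simp
  finally have 2: "c*((p*d - b*q)/?D) + d*((a*q - c*p)/?D) = q" .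
  show ?thesis using 1 2 by blast
qed

lemma det_inj:
  fixes a b c d s t :: complex
  assumes "a*d - b*c \<noteq> 0" "a*s + b*t = 0" "c*s + d*t = 0"
  shows "s = 0 \<and> t = 0"
proof -
  have "(a*d - b*c)*s = d*(a*s + b*t) - b*(c*s + d*t)" by (simp add: algebra_simps)
  then have 1: "(a*d - b*c)*s = 0" using assms by simp
  have "(a*d - b*c)*t = a*(c*s + d*t) - c*(a*s + b*t)" by (simp add: algebra_simps)
  then have 2: "(a*d - b*c)*t = 0" using assms by simp
  show ?thesis using 1 2 assms(1) by simp
qed

lemma parallel:
  fixes r s u1 u2 :: complex
  assumes "u1 \<noteq> 0 \<or> u2 \<noteq> 0" "r*u2 - s*u1 = 0"
  shows "\<exists>t. r = t*u1 \<and> s = t*u2"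
proof (cases "u1 = 0")
  case True
  then have "u2 \<noteq> 0" using assms by simp
  then have "r = (s/u2)*u1 \<and> s = (s/u2)*u2" using True assms by simp
  then show ?thesis by blast
next
  case False
  then have "r = (r/u1)*u1 \<and> s = (r/u1)*u2" using assms by (simp add: field_simps)
  then show ?thesis by blast
qed

lemma root_char:
  fixes a b c d l s :: complex
  assumes "s*s = (a-d)^2 + 4*b*c" "2*l = a + d + s \<or> 2*l = a + d - s"
  shows "c*b + d*(l - a) = l*(l - a)"
proof -
  have "s = 2*l - (a+d) \<or> s = -(2*l - (a+d))" using assms(2) by (auto simp: algebra_simps)
  then have "(2*l - (a+d))*(2*l - (a+d)) = s*s" by (metis minus_mult_minus)
  then have "(2*l - (a+d))*(2*l - (a+d)) = (a-d)*(a-d) + 4*b*c" using assms(1) by (simp add: power2_eq_square)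
  then have "4*(l*(l-a) - c*b - d*(l - a)) = 0" by (simp add: algebra_simps)
  then have "l*(l-a) - c*b - d*(l - a) = 0" by (metis mult_eq_0_iff zero_neq_numeral)
  then show ?thesis by (simp add: algebra_simps)
qed

lemma jordan2:
  fixes a b c d :: complex
  obtains (diag) l1 l2 p1 q1 p2 q2 where "p1*q2 - q1*p2 \<noteq> 0"
      "a*p1 + b*q1 = l1*p1" "c*p1 + d*q1 = l1*q1" "a*p2 + b*q2 = l2*p2" "c*p2 + d*q2 = l2*q2"
  | (jord) l p1 q1 p2 q2 where "p1*q2 - q1*p2 \<noteq> 0"
      "a*p1 + b*q1 = l*p1" "c*p1 + d*q1 = l*q1" "a*p2 + b*q2 = l*p2 + p1" "c*p2 + d*q2 = l*q2 + q1"
proof -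
  define s where "s = csqrt ((a-d)^2 + 4*b*c)"
  have hs: "s*s = (a-d)^2 + 4*b*c" using power2_csqrt[of "(a-d)^2 + 4*b*c"]
    by (simp add: s_def power2_eq_square)
  consider "b = 0" "a \<noteq> d" | "b = 0" "a = d" "c = 0" | "b = 0" "a = d" "c \<noteq> 0"
    | "b \<noteq> 0" "s \<noteq> 0" | "b \<noteq> 0" "s = 0" by blast
  then show ?thesis
  proof cases
    case 1
    show ?thesis
      by (rule diag[of "a-d" 1 c 0 a d]) (use 1 in \<open>auto simp: algebra_simps\<close>)
  next
    case 2
    show ?thesis
      by (rule diag[of 1 1 0 0 a a]) (use 2 in \<open>auto simp: algebra_simps\<close>)
  next
    case 3
    show ?thesis
      by (rule jord[of 0 0 1 "1/c" a]) (use 3 in \<open>auto simp: field_simps\<close>)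
  next
    case 4
    define l1 where "l1 = (a+d+s)/2"
    define l2 where "l2 = (a+d-s)/2"
    show ?thesis
    proof (rule diag[of b "l2 - a" "l1 - a" b l1 l2])
      show "b * (l2 - a) - (l1 - a) * b \<noteq> 0" using 4 by (simp add: l1_def l2_def field_simps)
      show "a * b + b * (l1 - a) = l1 * b" by (simp add: algebra_simps)
      show "a * b + b * (l2 - a) = l2 * b" by (simp add: algebra_simps)
      show "c * b + d * (l1 - a) = l1 * (l1 - a)" using root_char[OF hs, of l1] unfolding l1_def
        by simp
      show "c * b + d * (l2 - a) = l2 * (l2 - a)" using root_char[OF hs, of l2] unfolding l2_def
        by simp
    qed
  next
    case 5
    define l where "l = (a+d)/2"
    have hl: "c*b + d*(l - a) = l*(l - a)" using root_char[OF hs, of l] 5 unfolding l_def by simp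
    show ?thesis
    proof (rule jord[of b 1 "(d-a)/2" 0 l])
      show "b * 1 - (d - a) / 2 * 0 \<noteq> 0" using 5 by simp
      show "a * b + b * ((d - a) / 2) = l * b" by (simp add: l_def field_simps)
      have "(d - a)/2 = l - a" by (simp add: l_def field_simps)
      then show "c * b + d * ((d - a) / 2) = l * ((d - a) / 2)" using hl by (simp only: \<open>(d - a)/2 = l - a\<close>)
      show "a * 0 + b * 1 = l * 0 + b" by simp
      show "c * 0 + d * 1 = l * 1 + (d - a) / 2" by (simp add: l_def field_simps)
    qed
  qed
qed

lemma eig0_det:
  fixes a b c d p q :: complex
  assumes "a*p + b*q = 0" "c*p + d*q = 0" "p \<noteq> 0 \<or> q \<noteq> 0"
  shows "a*d - b*c = 0"
  using det_inj[where a=a and b=b and c=c and d=d and s=p and t=q] assms by blast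

lemma eig_same_scalar:
  fixes a b c d p1 q1 p2 q2 l :: complex
  assumes "p1*q2 - q1*p2 \<noteq> 0"
      "a*p1 + b*q1 = l*p1" "c*p1 + d*q1 = l*q1" "a*p2 + b*q2 = l*p2" "c*p2 + d*q2 = l*q2"
  shows "a = l \<and> b = 0 \<and> c = 0 \<and> d = l"
proof -
  have d: "p1*q2 - p2*q1 \<noteq> 0" using assms(1) by (simp add: mult.commute)
  have 1: "(a-l)*p1 + b*q1 = 0" "(a-l)*p2 + b*q2 = 0" using assms by (simp_all add: algebra_simps)
  have 2: "c*p1 + (d-l)*q1 = 0" "c*p2 + (d-l)*q2 = 0" using assms by (simp_all add: algebra_simps)
  have "a - l = 0 \<and> b = 0" using det_inj[where a=p1 and b=q1 and c=p2 and d=q2 and s="a-l" and t=b] 1 d by (simp add: mult.commute)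
  moreover have "c = 0 \<and> d - l = 0" using det_inj[where a=p1 and b=q1 and c=p2 and d=q2 and s=c and t="d-l"] 2 d by (simp add: mult.commute)
  ultimately show ?thesis by simp
qed



locale LA =
  fixes sc :: "complex \<Rightarrow> 'a::ab_group_add \<Rightarrow> 'a" and br :: "'a \<Rightarrow> 'a \<Rightarrow> 'a"
  assumes lie: "lie_algebra sc br"
begin

lemma vs: "vector_space sc" using lie by (simp add: lie_algebra_def)

sublocale vector_space sc by (rule vs)

lemma br_add_l: "br (x + y) z = br x z + br y z" using lie by (simp add: lie_algebra_def)
lemma br_add_r: "br x (y + z) = br x y + br x z" using lie by (simp add: lie_algebra_def)
lemma br_sc_l: "br (sc c x) y = sc c (br x y)" using lie by (simp add: lie_algebra_def)
lemma br_sc_r: "br x (sc c y) = sc c (br x y)" using lie by (simp add: lie_algebra_def)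
lemma br_self[simp]: "br x x = 0" using lie by (simp add: lie_algebra_def)
lemma jac: "br x (br y z) + br y (br z x) + br z (br x y) = 0" using lie by (simp add: lie_algebra_def)

lemma br_0_l[simp]: "br 0 x = 0"
  using br_add_l[of 0 0 x] by simp
lemma br_0_r[simp]: "br x 0 = 0"
  using br_add_r[of x 0 0] by simp
lemma br_neg_l: "br (- x) y = - br x y"
  using br_add_l[of x "-x" y] by (simp add: eq_neg_iff_add_eq_0 add.commute)
lemma br_neg_r: "br x (- y) = - br x y"
  using br_add_r[of x y "-y"] by (simp add: eq_neg_iff_add_eq_0 add.commute)
lemma br_diff_l: "br (x - y) z = br x z - br y z"
  using br_add_l[of x "-y" z] br_neg_l by simp
lemma br_diff_r: "br x (y - z) = br x y - br x z"
  using br_add_r[of x y "-z"] br_neg_r by simp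
lemma br_anti: "br x y = - br y x"
proof -
  have "br (x + y) (x + y) = 0" by simp
  then have "br x x + br y x + (br x y + br y y) = 0" by (simp only: br_add_l br_add_r)
  then have "br x y + br y x = 0" by (simp add: add.commute)
  then show ?thesis by (simp add: eq_neg_iff_add_eq_0)
qed
lemma jac2: "br x (br y z) = br (br x y) z + br y (br x z)"
proof -
  have "br x (br y z) = - br y (br z x) - br z (br x y)"
    using jac[of x y z] by (simp add: eq_neg_iff_add_eq_0 algebra_simps)
  also have "... = br y (br x z) + br (br x y) z"
    by (metis br_anti br_neg_r diff_minus_eq_add minus_minus)
  finally show ?thesis by (simp add: add.commute)
qed

lemmas brs = br_add_l br_add_r br_sc_l br_sc_r br_neg_l br_neg_r br_diff_l br_diff_r


lemma bwb3:
  assumes ind: "\<And>a b c. sc a (x 1) + sc b (x 2) + sc c (x 3) = 0 \<Longrightarrow> a = 0 \<and> b = 0 \<and> c = 0"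
    and sp: "\<And>z. \<exists>a b c. z = sc a (x 1) + sc b (x 2) + sc c (x 3)"
    and brk: "\<And>i j. i \<in> {1,2,3} \<Longrightarrow> j \<in> {1,2,3} \<Longrightarrow> br (x i) (x j) = table T i j"
  shows "basis_with_brackets sc br 3 x T"
proof -
  have I: "{1..3::nat} = {1,2,3}" by auto
  have d12: "x 1 \<noteq> x 2" using ind[of 1 "-1" 0] by auto
  have d13: "x 1 \<noteq> x 3" using ind[of 1 0 "-1"] by auto
  have d23: "x 2 \<noteq> x 3" using ind[of 0 1 "-1"] by auto
  have inj: "inj_on x {1..3}" unfolding I using d12 d13 d23 by (auto simp: inj_on_def)
  have "\<not> dependent {x 1, x 2, x 3}"
  proof
    assume "dependent {x 1, x 2, x 3}"
    then obtain u where u: "\<exists>v\<in>{x 1, x 2, x 3}. u v \<noteq> 0" "(\<Sum>v\<in>{x 1, x 2, x 3}. sc (u v) v) = 0"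
      using dependent_finite[of "{x 1, x 2, x 3}"] by auto
    have "sc (u (x 1)) (x 1) + sc (u (x 2)) (x 2) + sc (u (x 3)) (x 3) = 0"
      using u(2) d12 d13 d23 by (simp add: add.assoc)
    then show False using ind u(1) by blast
  qed
  moreover have "span {x 1, x 2, x 3} = UNIV"
  proof -
    have "z \<in> span {x 1, x 2, x 3}" for z
    proof -
      obtain a b c where z: "z = sc a (x 1) + sc b (x 2) + sc c (x 3)" using sp by blast
      have "x i \<in> span {x 1, x 2, x 3}" if "i \<in> {1,2,3}" for i using that by (auto intro: span_base)
      then show ?thesis unfolding z by (intro span_add span_scale) auto
    qed
    then show ?thesis by auto
  qed
  ultimately show ?thesis unfolding basis_with_brackets_def I using inj brk I by (auto simp: image_insert)
qed

lemma bwb4: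
  assumes ind: "\<And>a b c d. sc a (x 1) + sc b (x 2) + sc c (x 3) + sc d (x 4) = 0 \<Longrightarrow> a = 0 \<and> b = 0 \<and> c = 0 \<and> d = 0"
    and sp: "\<And>z. z \<in> span {x 1, x 2, x 3, x 4}"
    and brk: "\<And>i j. i \<in> {1,2,3,4} \<Longrightarrow> j \<in> {1,2,3,4} \<Longrightarrow> br (x i) (x j) = table T i j"
  shows "basis_with_brackets sc br 4 x T"
proof -
  have I: "{1..4::nat} = {1,2,3,4}" by auto
  have d12: "x 1 \<noteq> x 2" using ind[of 1 "-1" 0 0] by auto
  have d13: "x 1 \<noteq> x 3" using ind[of 1 0 "-1" 0] by auto
  have d14: "x 1 \<noteq> x 4" using ind[of 1 0 0 "-1"] by auto
  have d23: "x 2 \<noteq> x 3" using ind[of 0 1 "-1" 0] by auto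
  have d24: "x 2 \<noteq> x 4" using ind[of 0 1 0 "-1"] by auto
  have d34: "x 3 \<noteq> x 4" using ind[of 0 0 1 "-1"] by auto
  have inj: "inj_on x {1..4}" unfolding I using d12 d13 d14 d23 d24 d34 by (auto simp: inj_on_def)
  have "\<not> dependent {x 1, x 2, x 3, x 4}"
  proof
    assume "dependent {x 1, x 2, x 3, x 4}"
    then obtain u where u: "\<exists>v\<in>{x 1, x 2, x 3, x 4}. u v \<noteq> 0" "(\<Sum>v\<in>{x 1, x 2, x 3, x 4}. sc (u v) v) = 0"
      using dependent_finite[of "{x 1, x 2, x 3, x 4}"] by auto
    have "sc (u (x 1)) (x 1) + sc (u (x 2)) (x 2) + sc (u (x 3)) (x 3) + sc (u (x 4)) (x 4) = 0"
      using u(2) d12 d13 d14 d23 d24 d34 by (simp add: add.assoc)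
    then show False using ind u(1) by blast
  qed
  moreover have "span {x 1, x 2, x 3, x 4} = UNIV" using sp by auto
  ultimately show ?thesis unfolding basis_with_brackets_def I using inj brk I by (auto simp: image_insert)
qed

end


locale LA2 = LA +
  fixes e1 e2 :: 'a
  assumes brV: "\<forall>x y. \<exists>p q. br x y = sc p e1 + sc q e2"
    and ind: "\<forall>p q. sc p e1 + sc q e2 = 0 \<longrightarrow> p = 0 \<and> q = 0"
    and noline: "\<forall>w. \<exists>x p q. br x (sc p e1 + sc q e2) \<notin> span {w}"
    and central: "\<forall>z. (\<forall>x. br x z = 0) \<longrightarrow> (\<exists>p q. z = sc p e1 + sc q e2)"
begin

definition vec :: "complex \<Rightarrow> complex \<Rightarrow> 'a" where "vec p q = sc p e1 + sc q e2"

lemma vec_add: "vec p q + vec r s = vec (p+r) (q+s)"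
  by (simp add: vec_def scale_left_distrib ac_simps)
lemma vec_sc: "sc t (vec p q) = vec (t*p) (t*q)"
  by (simp add: vec_def scale_right_distrib)
lemma vec_neg: "- vec p q = vec (-p) (-q)"
  by (simp add: vec_def)
lemma vec_diff: "vec p q - vec r s = vec (p-r) (q-s)"
  by (simp add: vec_def scale_left_diff_distrib)
lemma vec_0: "vec 0 0 = 0" by (simp add: vec_def)
lemma vec_eq_0: "vec p q = 0 \<longleftrightarrow> p = 0 \<and> q = 0"
  using ind by (auto simp: vec_def)
lemma vec_eq_iff: "vec p q = vec r s \<longleftrightarrow> p = r \<and> q = s"
proof -
  have "vec p q = vec r s \<longleftrightarrow> vec p q - vec r s = 0" by simp
  also have "... \<longleftrightarrow> p = r \<and> q = s" by (simp add: vec_diff vec_eq_0)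
  finally show ?thesis .
qed
lemma e1_vec: "e1 = vec 1 0" and e2_vec: "e2 = vec 0 1" by (simp_all add: vec_def)
lemma brV': "\<exists>p q. br x y = vec p q" using brV by (simp add: vec_def)
lemma br_vec_r: "br x (vec p q) = sc p (br x e1) + sc q (br x e2)"
  by (simp add: vec_def brs)
lemma br_vec_l: "br (vec p q) y = sc p (br e1 y) + sc q (br e2 y)"
  by (simp add: vec_def brs)

lemma ab: "br e1 e2 = 0"
proof (rule ccontr)
  define u where "u = br e1 e2"
  assume "br e1 e2 \<noteq> 0"
  then have u0: "u \<noteq> 0" by (simp add: u_def)
  obtain u1 u2 where u: "u = vec u1 u2" using brV' u_def by blast
  have u12: "u1 \<noteq> 0 \<or> u2 \<noteq> 0" using u0 u vec_0 by auto
  have e21: "br e2 e1 = - u" using br_anti[of e2 e1] by (simp add: u_def)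
  have bvv: "br (vec p q) (vec r s) = sc (p*s - q*r) u" for p q r s
    by (simp add: br_vec_l br_vec_r e21 flip: u_def) (simp add: scale_left_diff_distrib algebra_simps)
  have bxu: "\<exists>t. br x u = sc t u" for x
  proof -
    obtain a c where ac: "br x e1 = vec a c" using brV' by blast
    obtain b d where bd: "br x e2 = vec b d" using brV' by blast
    have "br x u = br (br x e1) e2 + br e1 (br x e2)" unfolding u_def by (rule jac2)
    also have "... = sc (a + d) u" unfolding ac bd
      by (subst (2) e1_vec, subst e2_vec, simp add: bvv scale_left_distrib)
    finally show ?thesis by blast
  qed
  have "br x v \<in> span {u}" if "v = vec p q" for x v p q
  proof -
    obtain t where t: "br x u = sc t u" using bxu by blast
    obtain r s where rs: "br x v = vec r s" using brV' by blast
    define \<delta> where "\<delta> = p*u2 - q*u1"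
    have "br v u = br (vec p q) (vec u1 u2)" by (simp add: that u)
    also have "... = sc \<delta> u" by (simp add: bvv \<delta>_def)
    finally have vu: "br v u = sc \<delta> u" .
    have "br x (br v u) = br (br x v) u + br v (br x u)" by (rule jac2)
    moreover have "br x (br v u) = sc (\<delta>*t) u" by (simp add: vu t br_sc_r)
    moreover have "br (br x v) u = sc (r*u2 - s*u1) u" using bvv[of r s u1 u2] rs u by simp
    moreover have "br v (br x u) = sc (t*\<delta>) u" by (simp add: t vu br_sc_r)
    ultimately have "sc (\<delta>*t) u = sc (r*u2 - s*u1) u + sc (t*\<delta>) u" by simp
    then have "sc (r*u2 - s*u1) u = 0" by (simp add: mult.commute)
    then have "r*u2 - s*u1 = 0" using u0 by simp
    then obtain k where "r = k*u1" "s = k*u2" using parallel[OF u12] by blast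
    then have "br x v = sc k u" by (simp add: rs u vec_sc)
    then show ?thesis by (simp add: span_base span_scale)
  qed
  then show False using noline by (metis vec_def)
qed


lemma brvv[simp]: "br (vec p q) (vec r s) = 0"
  by (simp add: br_vec_l br_vec_r ab br_anti[of e2 e1])

lemma br_V_br[simp]: "br (vec p q) (br x y) = 0"
  using brV'[of x y] by auto

lemma br_br_V[simp]: "br (br x y) (vec p q) = 0"
  using brV'[of x y] by auto

definition cx :: "'a \<Rightarrow> complex" where "cx v = (SOME p. \<exists>q. v = vec p q)"
definition cy :: "'a \<Rightarrow> complex" where "cy v = (SOME q. \<exists>p. v = vec p q)"

lemma coord: assumes "v = vec p q" shows "cx v = p" "cy v = q"
proof -
  have "\<exists>q. v = vec (cx v) q" unfolding cx_def by (rule someI_ex) (use assms in blast)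
  then show "cx v = p" using assms vec_eq_iff by auto
  have "\<exists>p. v = vec p (cy v)" unfolding cy_def by (rule someI_ex) (use assms in blast)
  then show "cy v = q" using assms vec_eq_iff by auto
qed

definition ma where "ma x = cx (br x e1)"
definition mc where "mc x = cy (br x e1)"
definition mb where "mb x = cx (br x e2)"
definition md where "md x = cy (br x e2)"

lemma M1: "br x e1 = vec (ma x) (mc x)"
proof -
  obtain p q where "br x e1 = vec p q" using brV' by blast
  then show ?thesis using coord[of "br x e1" p q] by (simp add: ma_def mc_def)
qed
lemma M2: "br x e2 = vec (mb x) (md x)"
proof -
  obtain p q where "br x e2 = vec p q" using brV' by blast
  then show ?thesis using coord[of "br x e2" p q] by (simp add: mb_def md_def)
qed

lemma Mv: "br x (vec p q) = vec (ma x * p + mb x * q) (mc x * p + md x * q)"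
  by (simp add: br_vec_r M1 M2 vec_sc vec_add mult.commute)

lemma M_of1: "br z e1 = vec p q \<Longrightarrow> ma z = p \<and> mc z = q"
  using M1[of z] vec_eq_iff by auto
lemma M_of2: "br z e2 = vec p q \<Longrightarrow> mb z = p \<and> md z = q"
  using M2[of z] vec_eq_iff by auto

lemma M_lin:
  "ma (sc s x + sc t y) = s * ma x + t * ma y"
  "mb (sc s x + sc t y) = s * mb x + t * mb y"
  "mc (sc s x + sc t y) = s * mc x + t * mc y"
  "md (sc s x + sc t y) = s * md x + t * md y"
proof -
  have "br (sc s x + sc t y) e1 = sc s (br x e1) + sc t (br y e1)" by (simp add: brs)
  also have "... = vec (s * ma x + t * ma y) (s * mc x + t * mc y)"
    by (simp add: M1 vec_sc vec_add)
  finally have "br (sc s x + sc t y) e1 = vec (s * ma x + t * ma y) (s * mc x + t * mc y)" .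
  then show "ma (sc s x + sc t y) = s * ma x + t * ma y" "mc (sc s x + sc t y) = s * mc x + t * mc y"
    using M_of1 by blast+
  have "br (sc s x + sc t y) e2 = sc s (br x e2) + sc t (br y e2)" by (simp add: brs)
  also have "... = vec (s * mb x + t * mb y) (s * md x + t * md y)"
    by (simp add: M2 vec_sc vec_add)
  finally have "br (sc s x + sc t y) e2 = vec (s * mb x + t * mb y) (s * md x + t * md y)" .
  then show "mb (sc s x + sc t y) = s * mb x + t * mb y" "md (sc s x + sc t y) = s * md x + t * md y"
    using M_of2 by blast+
qed

lemma M_vec: "ma (vec p q) = 0" "mb (vec p q) = 0" "mc (vec p q) = 0" "md (vec p q) = 0"
proof -
  have "br (vec p q) e1 = vec 0 0" "br (vec p q) e2 = vec 0 0" by (metis e1_vec e2_vec brvv vec_0)+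
  then show "ma (vec p q) = 0" "mb (vec p q) = 0" "mc (vec p q) = 0" "md (vec p q) = 0"
    using M_of1 M_of2 by blast+
qed

lemma comm:
  "mb x * mc y = mb y * mc x"
  "mc y * (ma x - md x) = mc x * (ma y - md y)"
  "mb y * (ma x - md x) = mb x * (ma y - md y)"
proof -
  have "br (br x y) e1 = 0" by (metis e1_vec br_br_V)
  then have h1: "br x (br y e1) = br y (br x e1)" using jac2[of x y e1] by simp
  have "br (br x y) e2 = 0" by (metis e2_vec br_br_V)
  then have h2: "br x (br y e2) = br y (br x e2)" using jac2[of x y e2] by simp
  have a: "ma x * ma y + mb x * mc y = ma y * ma x + mb y * mc x"
      and b: "mc x * ma y + md x * mc y = mc y * ma x + md y * mc x"
    using h1 by (simp_all add: M1 Mv vec_eq_iff)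
  have c: "ma x * mb y + mb x * md y = ma y * mb x + mb y * md x"
    using h2 by (simp_all add: M2 Mv vec_eq_iff)
  show "mb x * mc y = mb y * mc x" using a by (simp add: mult.commute)
  show "mc y * (ma x - md x) = mc x * (ma y - md y)" using b by (simp add: algebra_simps)
  show "mb y * (ma x - md x) = mb x * (ma y - md y)" using c by (simp add: algebra_simps)
qed

definition nonscalar where "nonscalar x \<longleftrightarrow> mb x \<noteq> 0 \<or> mc x \<noteq> 0 \<or> ma x \<noteq> md x"

lemma centr_M:
  assumes "nonscalar x"
  shows "\<exists>\<alpha> \<beta>. ma y = \<alpha> + \<beta> * ma x \<and> mb y = \<beta> * mb x \<and> mc y = \<beta> * mc x \<and> md y = \<alpha> + \<beta> * md x"
  using centr[of "mb x" "mc y" "mb y" "mc x" "ma x" "md x" "ma y" "md y"] comm[of x y] assms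
  unfolding nonscalar_def by (auto simp: mult.commute)


lemma M_add: "ma (x + y) = ma x + ma y" "mb (x + y) = mb x + mb y" "mc (x + y) = mc x + mc y" "md (x + y) = md x + md y"
  using M_lin[of 1 x 1 y] by simp_all
lemma M_sc: "ma (sc t x) = t * ma x" "mb (sc t x) = t * mb x" "mc (sc t x) = t * mc x" "md (sc t x) = t * md x"
  using M_lin[of t x 0 x] by simp_all
lemma M_diff: "ma (x - y) = ma x - ma y" "mb (x - y) = mb x - mb y" "mc (x - y) = mc x - mc y" "md (x - y) = md x - md y"
  using M_lin[of 1 x "-1" y] by simp_all

lemma ex_inv: "\<exists>y. ma y * md y - mb y * mc y \<noteq> 0"
proof (rule ccontr)
  assume "\<not> ?thesis"
  then have D: "ma y * md y - mb y * mc y = 0" for y by blast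
  show False
  proof (cases "\<forall>y. ma y = 0 \<and> mb y = 0 \<and> mc y = 0 \<and> md y = 0")
    case True
    then have "br x (vec p q) = 0" for x p q by (simp add: Mv vec_0)
    then show False using noline span_zero by (metis vec_def)
  next
    case False
    then obtain x where nz: "\<not> (ma x = 0 \<and> mb x = 0 \<and> mc x = 0 \<and> md x = 0)" by blast
    have ns: "nonscalar x"
    proof (rule ccontr)
      assume "\<not> nonscalar x"
      then have "mb x = 0" "mc x = 0" "ma x = md x" by (auto simp: nonscalar_def)
      then have "ma x * ma x = 0" using D[of x] by simp
      then show False using nz \<open>mb x = 0\<close> \<open>mc x = 0\<close> \<open>ma x = md x\<close> by simp
    qed
    obtain w1 w2 where W: "\<forall>p q. \<exists>t. ma x*p + mb x*q = t*w1 \<and> mc x*p + md x*q = t*w2"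
      using image_line[OF D[of x]] by blast
    have "br y (vec p q) \<in> span {vec w1 w2}" for y p q
    proof -
      obtain \<alpha> \<beta> where ab: "ma y = \<alpha> + \<beta> * ma x" "mb y = \<beta> * mb x" "mc y = \<beta> * mc x" "md y = \<alpha> + \<beta> * md x"
        using centr_M[OF ns, of y] by blast
      have "\<alpha> = 0"
      proof (rule det_alpha[OF D[of x]])
        show "(\<alpha> + \<beta> * ma x) * (\<alpha> + \<beta> * md x) - \<beta> * mb x * (\<beta> * mc x) = 0"
          using D[of y] ab by simp
        show "(\<alpha> + (\<beta> + 1) * ma x) * (\<alpha> + (\<beta> + 1) * md x) - (\<beta> + 1) * mb x * ((\<beta> + 1) * mc x) = 0"
          using D[of "y + x"] ab by (simp add: M_add algebra_simps)
      qed
      obtain t where t: "ma x*p + mb x*q = t*w1" "mc x*p + md x*q = t*w2" using W by blast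
      have "br y (vec p q) = vec (\<beta> * (ma x*p + mb x*q)) (\<beta> * (mc x*p + md x*q))"
        using ab \<open>\<alpha> = 0\<close> by (simp add: Mv algebra_simps)
      also have "... = sc (\<beta>*t) (vec w1 w2)" by (simp add: t vec_sc mult.assoc)
      finally show ?thesis by (simp add: span_base span_scale)
    qed
    then show False using noline by (metis vec_def)
  qed
qed

lemma ker:
  assumes "ma k = 0" "mb k = 0" "mc k = 0" "md k = 0"
  shows "\<exists>p q. k = vec p q"
proof -
  obtain y where dy: "ma y * md y - mb y * mc y \<noteq> 0" using ex_inv by blast
  obtain p q where pq: "br y k = vec p q" using brV' by blast
  obtain s t where st: "ma y * s + mb y * t = p" "mc y * s + md y * t = q" using cramer[OF dy] by blast
  define z where "z = k - vec s t"
  have yz: "br y z = 0" by (simp add: z_def br_diff_r pq Mv st)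
  have zV: "br z (vec r r') = 0" for r r'
    by (simp add: Mv z_def M_diff M_vec assms vec_0)
  have "br x z = 0" for x
  proof -
    obtain r r' where rr: "br x z = vec r r'" using brV' by blast
    have "br y (br x z) = br (br y x) z + br x (br y z)" by (rule jac2)
    also have "... = 0" using yz brV'[of y x] zV br_anti by (metis add.right_neutral br_0_r neg_equal_0_iff_equal)
    finally have "vec (ma y * r + mb y * r') (mc y * r + md y * r') = 0" by (simp add: rr Mv)
    then have "r = 0 \<and> r' = 0" using det_inj[OF dy] vec_eq_0 by blast
    then show ?thesis by (simp add: rr vec_0)
  qed
  then obtain p' q' where "z = vec p' q'" using central by (metis vec_def)
  then have "k = vec (p' + s) (q' + t)" by (simp add: z_def vec_add[symmetric] algebra_simps)
  then show ?thesis by blast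
qed


lemma vec_basis:
  assumes "p1*q2 - q1*p2 \<noteq> 0"
  shows "\<exists>\<alpha> \<beta>. vec p q = sc \<alpha> (vec p1 q1) + sc \<beta> (vec p2 q2)"
proof -
  have "p1*q2 - p2*q1 \<noteq> 0" using assms by (simp add: mult.commute)
  then obtain s t where "p1*s + p2*t = p" "q1*s + q2*t = q" using cramer by blast
  then have "vec p q = sc s (vec p1 q1) + sc t (vec p2 q2)" by (simp add: vec_sc vec_add mult.commute)
  then show ?thesis by blast
qed

lemma vec_ind2:
  assumes "p1*q2 - q1*p2 \<noteq> 0" "sc \<alpha> (vec p1 q1) + sc \<beta> (vec p2 q2) = 0"
  shows "\<alpha> = 0 \<and> \<beta> = 0"
proof -
  have "p1*q2 - p2*q1 \<noteq> 0" using assms by (simp add: mult.commute)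
  moreover have "p1*\<alpha> + p2*\<beta> = 0" "q1*\<alpha> + q2*\<beta> = 0"
    using assms(2) by (simp_all add: vec_sc vec_add vec_eq_0 mult.commute)
  ultimately show ?thesis using det_inj by blast
qed

lemma vec_nz1: "(p1::complex)*q2 - q1*p2 \<noteq> 0 \<Longrightarrow> p1 \<noteq> 0 \<or> q1 \<noteq> 0"
proof (rule ccontr)
  assume "p1*q2 - q1*p2 \<noteq> 0" "\<not> (p1 \<noteq> 0 \<or> q1 \<noteq> 0)"
  then show False by simp
qed
lemma vec_nz2: "(p1::complex)*q2 - q1*p2 \<noteq> 0 \<Longrightarrow> p2 \<noteq> 0 \<or> q2 \<noteq> 0"
proof (rule ccontr)
  assume "p1*q2 - q1*p2 \<noteq> 0" "\<not> (p2 \<noteq> 0 \<or> q2 \<noteq> 0)"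
  then show False by simp
qed

lemma S1:
  assumes dy: "ma y * md y - mb y * mc y \<noteq> 0" and dec: "\<And>z. \<exists>t p q. z = sc t y + vec p q"
  shows "(\<exists>x. basis_with_brackets sc br 3 x [((1,2), x 2), ((1,3), x 2 + x 3)])
       \<or> (\<exists>x \<gamma>. \<gamma> \<noteq> 0 \<and> basis_with_brackets sc br 3 x [((1,2), x 2), ((1,3), sc \<gamma> (x 3))])"
proof (cases rule: jordan2[of "ma y" "mb y" "mc y" "md y"])
  case (diag l1 l2 p1 q1 p2 q2)
  have l1: "l1 \<noteq> 0"
  proof
    assume "l1 = 0"
    then show False using eig0_det[of "ma y" p1 "mb y" q1 "mc y" "md y"] diag vec_nz1[OF diag(1)] dy by auto
  qed
  have l2: "l2 \<noteq> 0"
  proof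
    assume "l2 = 0"
    then show False using eig0_det[of "ma y" p2 "mb y" q2 "mc y" "md y"] diag vec_nz2[OF diag(1)] dy by auto
  qed
  define x where "x = (\<lambda>i::nat. if i = 1 then sc (1/l1) y else if i = 2 then vec p1 q1 else vec p2 q2)"
  have x1: "x 1 = sc (1/l1) y" and x2: "x 2 = vec p1 q1" and x3: "x 3 = vec p2 q2" by (simp_all add: x_def)
  define T where "T = [((1::nat,2::nat), x 2), ((1,3), sc (l2/l1) (x 3))]"
  have b12: "br (x 1) (x 2) = x 2" using l1
    unfolding x1 x2 by (subst br_sc_l) (simp add: Mv diag vec_sc)
  have b13: "br (x 1) (x 3) = sc (l2/l1) (x 3)" using l1
    unfolding x1 x3 by (subst br_sc_l) (simp add: Mv diag vec_sc)
  have b23: "br (x 2) (x 3) = 0" by (simp add: x2 x3)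
  have brk: "br (x i) (x j) = table T i j" if "i \<in> {1,2,3}" "j \<in> {1,2,3}" for i j
    using that b12 b13 b23 br_anti[of "x 2" "x 1"] br_anti[of "x 3" "x 1"] br_anti[of "x 3" "x 2"]
    by (auto simp: table_def T_def)
  have ind: "a = 0 \<and> b = 0 \<and> c = 0" if h: "sc a (x 1) + sc b (x 2) + sc c (x 3) = 0" for a b c
  proof -
    have "br (sc a (x 1) + sc b (x 2) + sc c (x 3)) (x 2) = sc a (br (x 1) (x 2)) + sc b (br (x 2) (x 2)) + sc c (br (x 3) (x 2))"
      by (simp only: brs)
    also have "... = sc a (x 2)" using b12 by (simp add: x2 x3)
    finally have "br (sc a (x 1) + sc b (x 2) + sc c (x 3)) (x 2) = sc a (x 2)" .
    then have "sc a (x 2) = 0" using h by simp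
    moreover have "x 2 \<noteq> 0" using vec_nz1[OF diag(1)] by (simp add: x2 vec_eq_0)
    ultimately have a: "a = 0" by simp
    then have "sc b (vec p1 q1) + sc c (vec p2 q2) = 0" using h by (simp add: x2 x3)
    then show ?thesis using vec_ind2[OF diag(1)] a by blast
  qed
  have sp: "\<exists>a b c. z = sc a (x 1) + sc b (x 2) + sc c (x 3)" for z
  proof -
    obtain t p q where z: "z = sc t y + vec p q" using dec by blast
    obtain \<alpha> \<beta> where ab: "vec p q = sc \<alpha> (vec p1 q1) + sc \<beta> (vec p2 q2)" using vec_basis[OF diag(1)] by blast
    have "z = sc (t*l1) (x 1) + sc \<alpha> (x 2) + sc \<beta> (x 3)" using l1 unfolding x1 x2 x3 by (simp add: z ab add.assoc)
    then show ?thesis by blast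
  qed
  have "basis_with_brackets sc br 3 x T" by (rule bwb3[OF ind sp brk]) auto
  moreover have "l2/l1 \<noteq> 0" using l1 l2 by simp
  ultimately show ?thesis unfolding T_def by blast
next
  case (jord l p1 q1 p2 q2)
  have l: "l \<noteq> 0"
  proof
    assume "l = 0"
    then show False using eig0_det[of "ma y" p1 "mb y" q1 "mc y" "md y"] jord vec_nz1[OF jord(1)] dy by auto
  qed
  define x where "x = (\<lambda>i::nat. if i = 1 then sc (1/l) y else if i = 2 then vec (p1/l) (q1/l) else vec p2 q2)"
  have x1: "x 1 = sc (1/l) y" and x2: "x 2 = vec (p1/l) (q1/l)" and x3: "x 3 = vec p2 q2" by (simp_all add: x_def)
  define T where "T = [((1::nat,2::nat), x 2), ((1,3), x 2 + x 3)]"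
  have e1': "ma y * (p1/l) + mb y * (q1/l) = (ma y * p1 + mb y * q1)/l" by (simp add: add_divide_distrib)
  have e2': "mc y * (p1/l) + md y * (q1/l) = (mc y * p1 + md y * q1)/l" by (simp add: add_divide_distrib)
  have yx2: "br y (x 2) = vec p1 q1" using l unfolding x2 Mv e1' e2' jord by simp
  have yx3: "br y (x 3) = vec (l*p2 + p1) (l*q2 + q1)" unfolding x3 Mv jord by simp
  have "br (x 1) (x 2) = sc (1/l) (br y (x 2))" unfolding x1 by (rule br_sc_l)
  also have "... = x 2" unfolding yx2 by (simp add: x2 vec_sc)
  finally have b12: "br (x 1) (x 2) = x 2" .
  have "br (x 1) (x 3) = sc (1/l) (br y (x 3))" unfolding x1 by (rule br_sc_l)
  also have "... = x 2 + x 3" unfolding yx3 using l by (simp add: x2 x3 vec_sc vec_add field_simps)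
  finally have b13: "br (x 1) (x 3) = x 2 + x 3" .
  have b23: "br (x 2) (x 3) = 0" by (simp add: x2 x3)
  have brk: "br (x i) (x j) = table T i j" if "i \<in> {1,2,3}" "j \<in> {1,2,3}" for i j
    using that b12 b13 b23 br_anti[of "x 2" "x 1"] br_anti[of "x 3" "x 1"] br_anti[of "x 3" "x 2"]
    by (auto simp: table_def T_def)
  have ind: "a = 0 \<and> b = 0 \<and> c = 0" if h: "sc a (x 1) + sc b (x 2) + sc c (x 3) = 0" for a b c
  proof -
    have "br (sc a (x 1) + sc b (x 2) + sc c (x 3)) (x 2) = sc a (br (x 1) (x 2)) + sc b (br (x 2) (x 2)) + sc c (br (x 3) (x 2))"
      by (simp only: brs)
    also have "... = sc a (x 2)" using b12 by (simp add: x2 x3)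
    finally have "br (sc a (x 1) + sc b (x 2) + sc c (x 3)) (x 2) = sc a (x 2)" .
    then have "sc a (x 2) = 0" using h by simp
    moreover have "x 2 \<noteq> 0" using vec_nz1[OF jord(1)] l by (simp add: x2 vec_eq_0)
    ultimately have a: "a = 0" by simp
    then have "sc (b/l) (vec p1 q1) + sc c (vec p2 q2) = 0" using h by (simp add: x2 x3 vec_sc)
    then have "b / l = 0 \<and> c = 0" using vec_ind2[OF jord(1)] by blast
    then show ?thesis using a l by simp
  qed
  have sp: "\<exists>a b c. z = sc a (x 1) + sc b (x 2) + sc c (x 3)" for z
  proof -
    obtain t p q where z: "z = sc t y + vec p q" using dec by blast
    obtain \<alpha> \<beta> where ab: "vec p q = sc \<alpha> (vec p1 q1) + sc \<beta> (vec p2 q2)" using vec_basis[OF jord(1)] by blast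
    have "z = sc (t*l) (x 1) + sc (\<alpha>*l) (x 2) + sc \<beta> (x 3)" using l unfolding x1 x2 x3 by (simp add: z ab add.assoc vec_sc)
    then show ?thesis by blast
  qed
  have "basis_with_brackets sc br 3 x T" by (rule bwb3[OF ind sp brk]) auto
  then show ?thesis unfolding T_def by blast
qed


lemma S2:
  assumes I: "ma y1 = 1" "mb y1 = 0" "mc y1 = 0" "md y1 = 1" and ns: "nonscalar y2"
    and dec: "\<And>z. \<exists>s t p q. z = sc s y1 + sc t y2 + vec p q"
  shows "(\<exists>x. basis_with_brackets sc br 4 x [((1,2), x 2), ((3,4), x 4)])
       \<or> (\<exists>x. basis_with_brackets sc br 4 x [((1,4), x 3), ((2,3), x 3), ((2,4), x 4)])"
proof -
  have Iv: "br y1 (vec p q) = vec p q" for p q by (simp add: Mv I)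
  have Iw: "br y1 (br a b) = br a b" for a b using brV'[of a b] Iv by auto
  have wv: "br (br a b) (vec p q) = 0" for a b p q by simp
  have vecspan: "vec p q \<in> span {x 1, x 2, x 3, x 4}"
    if t1: "x 2 = vec pa qa \<or> x 3 = vec pa qa" and t2: "x 4 = vec pb qb" and t3: "pa*qb - qa*pb \<noteq> 0" for x :: "nat \<Rightarrow> 'a" and p q pa qa pb qb
  proof -
    obtain \<alpha> \<beta> where ab: "vec p q = sc \<alpha> (vec pa qa) + sc \<beta> (vec pb qb)" using vec_basis[OF t3] by blast
    have "vec pa qa \<in> span {x 1, x 2, x 3, x 4}" using t1 by (auto intro: span_base)
    moreover have "vec pb qb \<in> span {x 1, x 2, x 3, x 4}" using t2 by (auto intro: span_base)
    ultimately show ?thesis unfolding ab by (intro span_add span_scale)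
  qed
  show ?thesis
  proof (cases rule: jordan2[of "ma y2" "mb y2" "mc y2" "md y2"])
    case (diag l1 l2 p1 q1 p2 q2)
    have l12: "l1 \<noteq> l2"
    proof
      assume "l1 = l2"
      then show False using eig_same_scalar[of p1 q2 q1 p2 "ma y2" "mb y2" l1 "mc y2" "md y2"] diag ns
        by (auto simp: nonscalar_def)
    qed
    define X where "X = sc (1/(l1 - l2)) (y2 - sc l2 y1)"
    define w where "w = br X y1"
    define x where "x = (\<lambda>i::nat. if i = 1 then X + w else if i = 2 then vec p1 q1
                          else if i = 3 then y1 - (X + w) else vec p2 q2)"
    have x1: "x 1 = X + w" and x2: "x 2 = vec p1 q1" and x3: "x 3 = y1 - (X + w)" and x4: "x 4 = vec p2 q2"
      by (simp_all add: x_def)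
    have Xv1: "br X (vec p1 q1) = vec p1 q1"
    proof -
      have "br X (vec p1 q1) = sc (1/(l1 - l2)) (br y2 (vec p1 q1) - sc l2 (br y1 (vec p1 q1)))"
        unfolding X_def by (simp add: brs)
      also have "... = sc (1/(l1 - l2)) (vec (l1*p1 - l2*p1) (l1*q1 - l2*q1))"
        by (simp add: Mv diag I vec_sc vec_diff vec_0)
      also have "... = vec p1 q1"
      proof -
        have "l1 - l2 \<noteq> 0" using l12 by simp
        then have "(l1*p1 - l2*p1) / (l1 - l2) = p1" "(l1*q1 - l2*q1) / (l1 - l2) = q1"
          by (simp_all add: left_diff_distrib[symmetric])
        then show ?thesis by (simp add: vec_sc)
      qed
      finally show ?thesis .
    qed
    have Xv2: "br X (vec p2 q2) = 0"
    proof -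
      have "br X (vec p2 q2) = sc (1/(l1 - l2)) (br y2 (vec p2 q2) - sc l2 (br y1 (vec p2 q2)))"
        unfolding X_def by (simp add: brs)
      also have "... = sc (1/(l1 - l2)) (vec (l2*p2 - l2*p2) (l2*q2 - l2*q2))"
        by (simp add: Mv diag I vec_sc vec_diff vec_0)
      also have "... = 0" by (simp add: vec_0)
      finally show ?thesis .
    qed
    have b12: "br (x 1) (x 2) = x 2" unfolding x1 x2 by (simp add: br_add_l Xv1 w_def)
    have b14: "br (x 1) (x 4) = 0" unfolding x1 x4 by (simp add: br_add_l Xv2 w_def)
    have b13: "br (x 1) (x 3) = 0"
    proof -
      have "br (x 1) (x 3) = br X y1 + br w y1"
        unfolding x1 x3 by (simp add: brs)
      also have "... = 0" using Iw[of X y1] br_anti[of w y1] by (simp add: w_def)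
      finally show ?thesis .
    qed
    have b32: "br (x 3) (x 2) = 0" unfolding x3 x2
      by (simp add: brs Iv Xv1 w_def)
    have b34: "br (x 3) (x 4) = x 4" unfolding x3 x4
      by (simp add: brs Iv Xv2 w_def)
    have b24: "br (x 2) (x 4) = 0" by (simp add: x2 x4)
    define T where "T = [((1::nat,2::nat), x 2), ((3,4), x 4)]"
    have brk: "br (x i) (x j) = table T i j" if "i \<in> {1,2,3,4}" "j \<in> {1,2,3,4}" for i j
      using that b12 b13 b14 b32 b34 b24 br_anti[of "x 2" "x 1"] br_anti[of "x 3" "x 1"] br_anti[of "x 4" "x 1"]
        br_anti[of "x 2" "x 3"] br_anti[of "x 4" "x 3"] br_anti[of "x 4" "x 2"]
      by (auto simp: table_def T_def)
    have ind: "a = 0 \<and> b = 0 \<and> c = 0 \<and> d = 0"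
      if h: "sc a (x 1) + sc b (x 2) + sc c (x 3) + sc d (x 4) = 0" for a b c d
    proof -
      have "br (sc a (x 1) + sc b (x 2) + sc c (x 3) + sc d (x 4)) (x 2) =
            sc a (br (x 1) (x 2)) + sc b (br (x 2) (x 2)) + sc c (br (x 3) (x 2)) + sc d (br (x 4) (x 2))"
        by (simp only: brs)
      also have "... = sc a (x 2)" using b12 b32 by (simp add: x2 x4)
      finally have "sc a (x 2) = 0" using h by simp
      moreover have "x 2 \<noteq> 0" using vec_nz1[OF diag(1)] by (simp add: x2 vec_eq_0)
      ultimately have a: "a = 0" by simp
      have "br (sc a (x 1) + sc b (x 2) + sc c (x 3) + sc d (x 4)) (x 4) =
            sc a (br (x 1) (x 4)) + sc b (br (x 2) (x 4)) + sc c (br (x 3) (x 4)) + sc d (br (x 4) (x 4))"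
        by (simp only: brs)
      also have "... = sc c (x 4)" using b14 b34 b24 by simp
      finally have "sc c (x 4) = 0" using h by simp
      moreover have "x 4 \<noteq> 0" using vec_nz2[OF diag(1)] by (simp add: x4 vec_eq_0)
      ultimately have c: "c = 0" by simp
      have "sc b (vec p1 q1) + sc d (vec p2 q2) = 0" using h a c by (simp add: x2 x4)
      then show ?thesis using vec_ind2[OF diag(1)] a c by blast
    qed
    have sp: "z \<in> span {x 1, x 2, x 3, x 4}" for z
    proof -
      let ?S = "span {x 1, x 2, x 3, x 4}"
      have vs: "vec p q \<in> ?S" for p q using vecspan[where x=x and pa=p1 and qa=q1 and pb=p2 and qb=q2 and p=p and q=q] x2 x4 diag(1) by blast
      have wS: "w \<in> ?S" using brV'[of X y1] vs by (auto simp: w_def)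
      have x1S: "x 1 \<in> ?S" "x 3 \<in> ?S" by (auto intro: span_base)
      have y1S: "y1 \<in> ?S" using span_add[OF x1S] unfolding x1 x3 by simp
      have XS: "X \<in> ?S" using span_diff[OF x1S(1) wS] unfolding x1 by simp
      have "y2 = sc (l1 - l2) X + sc l2 y1" using l12 unfolding X_def by (simp add: scale_right_diff_distrib)
      then have y2S: "y2 \<in> ?S" using XS y1S by (simp add: span_add span_scale)
      obtain s t p q where "z = sc s y1 + sc t y2 + vec p q" using dec by blast
      then show ?thesis using y1S y2S vs by (simp add: span_add span_scale)
    qed
    have "basis_with_brackets sc br 4 x T" by (rule bwb4[OF ind sp brk]) auto
    then show ?thesis unfolding T_def by blast
  next
    case (jord l p1 q1 p2 q2)
    define X where "X = y2 - sc l y1"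
    define w where "w = br X y1"
    define x where "x = (\<lambda>i::nat. if i = 1 then X + w else if i = 2 then y1
                          else if i = 3 then vec p1 q1 else vec p2 q2)"
    have x1: "x 1 = X + w" and x2: "x 2 = y1" and x3: "x 3 = vec p1 q1" and x4: "x 4 = vec p2 q2"
      by (simp_all add: x_def)
    have Xv1: "br X (vec p1 q1) = 0"
    proof -
      have "br X (vec p1 q1) = br y2 (vec p1 q1) - sc l (br y1 (vec p1 q1))"
        unfolding X_def by (simp add: brs)
      also have "... = vec (l*p1 - l*p1) (l*q1 - l*q1)"
        by (simp add: Mv jord I vec_sc vec_diff vec_0)
      also have "... = 0" by (simp add: vec_0)
      finally show ?thesis .
    qed
    have Xv2: "br X (vec p2 q2) = vec p1 q1"
    proof -
      have "br X (vec p2 q2) = br y2 (vec p2 q2) - sc l (br y1 (vec p2 q2))"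
        unfolding X_def by (simp add: brs)
      also have "... = vec (l*p2 + p1 - l*p2) (l*q2 + q1 - l*q2)"
        by (simp add: Mv jord I vec_sc vec_diff vec_0)
      also have "... = vec p1 q1" by simp
      finally show ?thesis .
    qed
    have b13: "br (x 1) (x 3) = 0" unfolding x1 x3 by (simp add: br_add_l Xv1 w_def)
    have b14: "br (x 1) (x 4) = x 3" unfolding x1 x4 x3 by (simp add: br_add_l Xv2 w_def)
    have b12: "br (x 1) (x 2) = 0"
    proof -
      have "br (x 1) (x 2) = br X y1 + br w y1"
        unfolding x1 x2 by (simp add: brs)
      also have "... = 0" using Iw[of X y1] br_anti[of w y1] by (simp add: w_def)
      finally show ?thesis .
    qed
    have b23: "br (x 2) (x 3) = x 3" unfolding x2 x3 by (simp add: Iv)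
    have b24: "br (x 2) (x 4) = x 4" unfolding x2 x4 by (simp add: Iv)
    have b34: "br (x 3) (x 4) = 0" by (simp add: x3 x4)
    define T where "T = [((1::nat,4::nat), x 3), ((2,3), x 3), ((2,4), x 4)]"
    have brk: "br (x i) (x j) = table T i j" if "i \<in> {1,2,3,4}" "j \<in> {1,2,3,4}" for i j
      using that b12 b13 b14 b23 b34 b24 br_anti[of "x 2" "x 1"] br_anti[of "x 3" "x 1"] br_anti[of "x 4" "x 1"]
        br_anti[of "x 3" "x 2"] br_anti[of "x 4" "x 3"] br_anti[of "x 4" "x 2"]
      by (auto simp: table_def T_def)
    have ind: "a = 0 \<and> b = 0 \<and> c = 0 \<and> d = 0"
      if h: "sc a (x 1) + sc b (x 2) + sc c (x 3) + sc d (x 4) = 0" for a b c d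
    proof -
      have x3nz: "x 3 \<noteq> 0" using vec_nz1[OF jord(1)] by (simp add: x3 vec_eq_0)
      have "br (sc a (x 1) + sc b (x 2) + sc c (x 3) + sc d (x 4)) (x 3) =
            sc a (br (x 1) (x 3)) + sc b (br (x 2) (x 3)) + sc c (br (x 3) (x 3)) + sc d (br (x 4) (x 3))"
        by (simp only: brs)
      also have "... = sc b (x 3)" using b13 b23 by (simp add: x3 x4)
      finally have "sc b (x 3) = 0" using h by simp
      then have b: "b = 0" using x3nz by simp
      have "br (sc a (x 1) + sc b (x 2) + sc c (x 3) + sc d (x 4)) (x 4) =
            sc a (br (x 1) (x 4)) + sc b (br (x 2) (x 4)) + sc c (br (x 3) (x 4)) + sc d (br (x 4) (x 4))"
        by (simp only: brs)
      also have "... = sc a (x 3)" using b14 b24 b34 b by simp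
      finally have "sc a (x 3) = 0" using h by simp
      then have a: "a = 0" using x3nz by simp
      have "sc c (vec p1 q1) + sc d (vec p2 q2) = 0" using h a b by (simp add: x3 x4)
      then show ?thesis using vec_ind2[OF jord(1)] a b by blast
    qed
    have sp: "z \<in> span {x 1, x 2, x 3, x 4}" for z
    proof -
      let ?S = "span {x 1, x 2, x 3, x 4}"
      have vs: "vec p q \<in> ?S" for p q using vecspan[where x=x and pa=p1 and qa=q1 and pb=p2 and qb=q2 and p=p and q=q] x3 x4 jord(1) by blast
      have wS: "w \<in> ?S" using brV'[of X y1] vs by (auto simp: w_def)
      have x1S: "x 1 \<in> ?S" "x 2 \<in> ?S" by (auto intro: span_base)
      have y1S: "y1 \<in> ?S" using x1S unfolding x2 by simp
      have XS: "X \<in> ?S" using span_diff[OF x1S(1) wS] unfolding x1 by simp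
      have "y2 = X + sc l y1" unfolding X_def by simp
      then have y2S: "y2 \<in> ?S" using XS y1S by (simp add: span_add span_scale)
      obtain s t p q where "z = sc s y1 + sc t y2 + vec p q" using dec by blast
      then show ?thesis using y1S y2S vs by (simp add: span_add span_scale)
    qed
    have "basis_with_brackets sc br 4 x T" by (rule bwb4[OF ind sp brk]) auto
    then show ?thesis unfolding T_def by blast
  qed
qed


lemma main:
  "(\<exists>x. basis_with_brackets sc br 4 x [((1,2), x 2), ((3,4), x 4)])
       \<or> (\<exists>x. basis_with_brackets sc br 4 x [((1,4), x 3), ((2,3), x 3), ((2,4), x 4)])
       \<or> (\<exists>x. basis_with_brackets sc br 3 x [((1,2), x 2), ((1,3), x 2 + x 3)])
       \<or> (\<exists>x \<gamma>. \<gamma> \<noteq> 0 \<and> basis_with_brackets sc br 3 x [((1,2), x 2), ((1,3), sc \<gamma> (x 3))])"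
proof -
  obtain y0 where dy0: "ma y0 * md y0 - mb y0 * mc y0 \<noteq> 0" using ex_inv by blast
  show ?thesis
  proof (cases "\<exists>x. nonscalar x")
    case True
    then obtain x where ns: "nonscalar x" by blast
    note C = centr_M[OF ns]
    show ?thesis
    proof (cases "\<exists>y \<alpha> \<beta>. ma y = \<alpha> + \<beta> * ma x \<and> mb y = \<beta> * mb x \<and> mc y = \<beta> * mc x \<and> md y = \<alpha> + \<beta> * md x \<and> \<alpha> \<noteq> 0")
      case True
      then obtain y \<alpha> \<beta> where y: "ma y = \<alpha> + \<beta> * ma x" "mb y = \<beta> * mb x" "mc y = \<beta> * mc x" "md y = \<alpha> + \<beta> * md x" and a0: "\<alpha> \<noteq> 0"
        by blast
      define y1 where "y1 = sc (1/\<alpha>) (y - sc \<beta> x)"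
      have I: "ma y1 = 1" "mb y1 = 0" "mc y1 = 0" "md y1 = 1"
        using a0 by (simp_all add: y1_def M_sc M_diff y)
      have dec: "\<exists>s t p q. z = sc s y1 + sc t x + vec p q" for z
      proof -
        obtain \<alpha>' \<beta>' where z: "ma z = \<alpha>' + \<beta>' * ma x" "mb z = \<beta>' * mb x" "mc z = \<beta>' * mc x" "md z = \<alpha>' + \<beta>' * md x"
          using C[of z] by blast
        define k where "k = z - sc \<alpha>' y1 - sc \<beta>' x"
        have "ma k = 0" "mb k = 0" "mc k = 0" "md k = 0"
          by (simp_all add: k_def M_diff M_sc I z)
        then obtain p q where "k = vec p q" using ker by blast
        then have "z = sc \<alpha>' y1 + sc \<beta>' x + vec p q" by (simp add: k_def algebra_simps)
        then show ?thesis by blast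
      qed
      show ?thesis using S2[OF I ns dec] by blast
    next
      case False
      then have A0: "\<And>y \<alpha> \<beta>. ma y = \<alpha> + \<beta> * ma x \<Longrightarrow> mb y = \<beta> * mb x \<Longrightarrow> mc y = \<beta> * mc x \<Longrightarrow> md y = \<alpha> + \<beta> * md x \<Longrightarrow> \<alpha> = 0"
        by blast
      obtain \<alpha> \<beta> where y: "ma y0 = \<alpha> + \<beta> * ma x" "mb y0 = \<beta> * mb x" "mc y0 = \<beta> * mc x" "md y0 = \<alpha> + \<beta> * md x"
        using C[of y0] by blast
      have "\<alpha> = 0" using A0[OF y] .
      then have "ma y0 * md y0 - mb y0 * mc y0 = (\<beta>*\<beta>) * (ma x * md x - mb x * mc x)"
        using y by (simp add: algebra_simps)
      then have dx: "ma x * md x - mb x * mc x \<noteq> 0" using dy0 by auto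
      have dec: "\<exists>t p q. z = sc t x + vec p q" for z
      proof -
        obtain \<alpha>' \<beta>' where z: "ma z = \<alpha>' + \<beta>' * ma x" "mb z = \<beta>' * mb x" "mc z = \<beta>' * mc x" "md z = \<alpha>' + \<beta>' * md x"
          using C[of z] by blast
        have "\<alpha>' = 0" using A0[OF z] .
        define k where "k = z - sc \<beta>' x"
        have "ma k = 0" "mb k = 0" "mc k = 0" "md k = 0"
          using \<open>\<alpha>' = 0\<close> by (simp_all add: k_def M_diff M_sc z)
        then obtain p q where "k = vec p q" using ker by blast
        then have "z = sc \<beta>' x + vec p q" by (simp add: k_def algebra_simps)
        then show ?thesis by blast
      qed
      show ?thesis using S1[OF dx dec] by blast
    qed
  next
    case False
    then have sc: "mb z = 0" "mc z = 0" "md z = ma z" for z by (auto simp: nonscalar_def)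
    have a0: "ma y0 \<noteq> 0" using dy0 sc[of y0] by auto
    have dec: "\<exists>t p q. z = sc t y0 + vec p q" for z
    proof -
      define k where "k = z - sc (ma z / ma y0) y0"
      have "ma k = 0" "mb k = 0" "mc k = 0" "md k = 0"
        using a0 by (simp_all add: k_def M_diff M_sc sc)
      then obtain p q where "k = vec p q" using ker by blast
      then have "z = sc (ma z / ma y0) y0 + vec p q" by (simp add: k_def algebra_simps)
      then show ?thesis by blast
    qed
    show ?thesis using S1[OF dy0 dec] by blast
  qed
qed

end


context LA begin

lemma lcs1: "lcs sc br 1 = span {br a b | a b. a \<in> UNIV \<and> b \<in> UNIV}"
  by (simp add: brk_set_def)

lemma lcs2: "lcs sc br 2 = span {br a b | a b. a \<in> UNIV \<and> b \<in> lcs sc br 1}"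
  by (simp add: brk_set_def numeral_2_eq_2 del: lcs.simps(2)) (simp add: brk_set_def)

lemma span2: "x \<in> span {e1, e2} \<Longrightarrow> \<exists>p q. x = sc p e1 + sc q e2"
proof -
  assume "x \<in> span {e1, e2}"
  then obtain k where "x - sc k e1 \<in> span {e2}" using span_breakdown_eq by blast
  then obtain m where "x - sc k e1 = sc m e2" using span_singleton by auto
  then have "x = sc k e1 + sc m e2" by (simp add: algebra_simps)
  then show ?thesis by blast
qed

lemma la2_exists:
  assumes dim1: "dim (lcs sc br 1) = 2" and dim2: "dim (lcs sc br 2) = 2" and pr: "pure sc br"
  shows "\<exists>e1 e2. LA2 sc br e1 e2"
proof -
  let ?V = "lcs sc br 1"
  obtain B where B: "B \<subseteq> ?V" "independent B" "?V \<subseteq> span B" "card B = dim ?V"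
    using basis_exists by blast
  then obtain e1 e2 where e12: "B = {e1, e2}" "e1 \<noteq> e2" using dim1 card_2_iff by metis
  have inB: "x \<in> ?V \<Longrightarrow> \<exists>p q. x = sc p e1 + sc q e2" for x using B(3) e12 span2 by blast
  have brin: "br x y \<in> ?V" for x y unfolding lcs1 by (rule span_base) blast
  have brV: "\<forall>x y. \<exists>p q. br x y = sc p e1 + sc q e2" using inB brin by blast
  have ind: "\<forall>p q. sc p e1 + sc q e2 = 0 \<longrightarrow> p = 0 \<and> q = 0"
  proof (intro allI impI)
    fix p q assume h: "sc p e1 + sc q e2 = 0"
    show "p = 0 \<and> q = 0"
    proof (rule ccontr)
      assume nz: "\<not> (p = 0 \<and> q = 0)"
      define u where "u v = (if v = e1 then p else q)" for v
      have "(\<Sum>v\<in>{e1, e2}. sc (u v) v) = 0" using h e12(2) by (simp add: u_def)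
      moreover have "\<exists>v\<in>{e1,e2}. u v \<noteq> 0" using nz e12(2) by (auto simp: u_def)
      ultimately have "dependent {e1, e2}" using dependent_finite[of "{e1, e2}"] by blast
      then show False using B(2) e12 by simp
    qed
  qed
  have noline: "\<forall>w. \<exists>x p q. br x (sc p e1 + sc q e2) \<notin> span {w}"
  proof (rule ccontr)
    assume "\<not> ?thesis"
    then obtain w where w: "\<And>x p q. br x (sc p e1 + sc q e2) \<in> span {w}" by blast
    have "{br a b | a b. a \<in> UNIV \<and> b \<in> ?V} \<subseteq> span {w}" using w inB by blast
    then have "lcs sc br 2 \<subseteq> span {w}" unfolding lcs2 by (rule span_minimal) simp
    moreover obtain B2 where B2: "B2 \<subseteq> lcs sc br 2" "independent B2" "card B2 = dim (lcs sc br 2)"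
      using basis_exists by metis
    ultimately have "card B2 \<le> card {w}" using independent_span_bound[of "{w}" B2] by auto
    then show False using dim2 B2 by simp
  qed
  have central: "\<forall>z. (\<forall>x. br x z = 0) \<longrightarrow> (\<exists>p q. z = sc p e1 + sc q e2)"
  proof (intro allI impI)
    fix z assume zc: "\<forall>x. br x z = 0"
    show "\<exists>p q. z = sc p e1 + sc q e2"
    proof (rule ccontr)
      assume nz: "\<not> ?thesis"
      have zB: "z \<notin> span B" using nz e12 span2 by blast
      then have z0: "z \<noteq> 0" using span_zero by auto
      have indI: "independent (insert z B)" using independent_insertI[OF zB B(2)] .
      define E where "E = extend_basis (insert z B)"
      have EE: "insert z B \<subseteq> E" "independent E" "span E = UNIV"
        using extend_basis_superset[OF indI] independent_extend_basis[OF indI] span_extend_basis[OF indI]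
        by (simp_all add: E_def)
      define A where "A = span {z}"
      define C where "C = span (E - {z})"
      have zC: "z \<notin> C" using EE(1,2) unfolding C_def dependent_def by auto
      have VC: "?V \<subseteq> C"
      proof -
        have "B \<subseteq> E - {z}" using EE(1) zB span_base by blast
        then have "span B \<subseteq> C" unfolding C_def by (rule span_mono)
        then show ?thesis using B(3) by blast
      qed
      have zmul: "br x (sc c z) = 0" for x c using zc by (simp add: br_sc_r)
      have "br x y \<in> A" if "y \<in> A" for x y
        using that zmul span_zero unfolding A_def span_singleton by auto
      then have "lie_ideal sc br A" unfolding lie_ideal_def A_def by auto
      moreover have "lie_ideal sc br C" unfolding lie_ideal_def C_def
        using brin VC C_def by auto
      moreover have "A \<noteq> {0}" using z0 span_base[of z "{z}"] unfolding A_def by auto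
      moreover have "\<forall>a\<in>A. \<forall>a'\<in>A. br a a' = 0" unfolding A_def using zmul by (auto simp: span_singleton)
      moreover have "A \<inter> C = {0}"
      proof -
        have "sc c z \<in> C \<Longrightarrow> c = 0" for c
        proof (rule ccontr)
          assume "sc c z \<in> C" "c \<noteq> 0"
          from \<open>sc c z \<in> C\<close> have "sc (1/c) (sc c z) \<in> C" unfolding C_def by (rule span_scale)
          then show False using zC \<open>c \<noteq> 0\<close> by simp
        qed
        then show ?thesis unfolding A_def C_def by (auto simp: span_singleton span_zero)
      qed
      moreover have "{a + b | a b. a \<in> A \<and> b \<in> C} = UNIV"
      proof -
        have "y \<in> {a + b | a b. a \<in> A \<and> b \<in> C}" for y
        proof -
          have "y \<in> span (insert z (E - {z}))" using EE(1,3) by (simp add: insert_absorb)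
          then obtain k where "y - sc k z \<in> C" unfolding C_def using span_breakdown_eq by blast
          moreover have "sc k z \<in> A" unfolding A_def by (auto simp: span_singleton)
          ultimately show ?thesis by force
        qed
        then show ?thesis by auto
      qed
      ultimately show False using pr unfolding pure_def by blast
    qed
  qed
  have "LA2 sc br e1 e2"
    by (unfold_locales) (use brV ind noline central in auto)
  then show ?thesis by blast
qed

end

theorem theorem3p9:
  fixes sc :: "complex \<Rightarrow> 'a::ab_group_add \<Rightarrow> 'a" and br :: "'a \<Rightarrow> 'a \<Rightarrow> 'a"
  assumes "lie_algebra sc br" and "fin_dim sc"
    and "pure sc br" and "\<not> nilpotent sc br" and "solvable sc br"
    and "breadth sc br = 2"
    and "vector_space.dim sc (lcs sc br 1) = 2"
    and "\<forall>k\<ge>2. vector_space.dim sc (lcs sc br k) = 2"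
  shows "(\<exists>x. basis_with_brackets sc br 5 x [((1,5), x 4), ((2,4), x 4), ((3,5), x 5)])
       \<or> (\<exists>x. basis_with_brackets sc br 4 x [((1,2), x 2), ((3,4), x 4)])
       \<or> (\<exists>x. basis_with_brackets sc br 4 x [((1,4), x 3), ((2,3), x 3), ((2,4), x 4)])
       \<or> (\<exists>x. basis_with_brackets sc br 3 x [((1,2), x 2), ((1,3), x 2 + x 3)])
       \<or> (\<exists>x \<gamma>. \<gamma> \<noteq> 0 \<and> basis_with_brackets sc br 3 x [((1,2), x 2), ((1,3), sc \<gamma> (x 3))])"
proof -
  interpret LA sc br by (rule LA.intro) (rule assms(1))
  obtain e1 e2 where "LA2 sc br e1 e2"
    using la2_exists[OF assms(7) _ assms(3)] assms(8) by auto
  then interpret L2: LA2 sc br e1 e2 .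
  show ?thesis using L2.main by blast
qed


end
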